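(* Let $\alpha\in(0,1)$ and let $m\ge1$ be an integer. The $(m,m)$ Padé approximant $r_m$ of $(1+t)^{-\alpha}$ (normalized so that its denominator equals $1$ at $t=0$) is monotonically decreasing on $[0,\infty)$.
   Context: The $(m,m)$ Padé approximant of $(1+t)^{-\alpha}$ is the rational function $r_m=P_m/Q_m$ with $P_m,Q_m$ polynomials of degree at most $m$, $Q_m(0)=1$, whose Maclaurin expansion agrees with that of $(1+t)^{-\alpha}$ up to and including the coefficient of $t^{2m}$. *)

theory Defs
  imports "HOL-Analysis.Analysis" "HOL-Computational_Algebra.Polynomial"
begin

definition maclaurin_coeff :: "(real \<Rightarrow> real) \<Rightarrow> nat \<Rightarrow> real" where
  "maclaurin_coeff f k = (deriv ^^ k) f 0 / fact k"

definition is_pade_mm :: "real \<Rightarrow> nat \<Rightarrow> real poly \<Rightarrow> real poly \<Rightarrow> bool" where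
  "is_pade_mm \<alpha> m P Q \<longleftrightarrow>
     degree P \<le> m \<and> degree Q \<le> m \<and> poly Q 0 = 1 \<and>
     (\<forall>k\<le>2*m. maclaurin_coeff (\<lambda>t. poly P t / poly Q t) k
               = maclaurin_coeff (\<lambda>t. (1 + t) powr (-\<alpha>)) k)"

end

theory Submission
  imports Defs "HOL-Computational_Algebra.Polynomial_FPS" "HOL-Computational_Algebra.Polynomial_Factorial"
    "HOL-Computational_Algebra.Field_as_Ring"
begin


lemma fps_nth_conv_deriv_real:
  fixes f :: "real fps"
  assumes "fps_conv_radius f > 0"
  shows   "fps_nth f n = (deriv ^^ n) (eval_fps f) 0 / fact n"
  using assms
proof (induction n arbitrary: f)
  case 0
  thus ?case by (simp add: eval_fps_def)
next
  case (Suc n f)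
  have "(deriv ^^ Suc n) (eval_fps f) 0 = (deriv ^^ n) (deriv (eval_fps f)) 0"
    unfolding funpow_Suc_right o_def ..
  also have "eventually (\<lambda>z::real. z \<in> eball 0 (fps_conv_radius f)) (nhds 0)"
    using Suc.prems by (intro eventually_nhds_in_open) (auto simp: zero_ereal_def)
  hence "eventually (\<lambda>z. deriv (eval_fps f) z = eval_fps (fps_deriv f) z) (nhds 0)"
    by eventually_elim (simp add: eval_fps_deriv)
  hence "(deriv ^^ n) (deriv (eval_fps f)) 0 = (deriv ^^ n) (eval_fps (fps_deriv f)) 0"
    by (intro higher_deriv_cong_ev refl)
  also have "\<dots> / fact n = fps_nth (fps_deriv f) n"
    using Suc.prems fps_conv_radius_deriv[of f]
    by (intro Suc.IH [symmetric]) auto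
  also have "\<dots> / of_nat (Suc n) = fps_nth f (Suc n)"
    by (simp add: fps_deriv_def del: of_nat_Suc)
  finally show ?case by (simp add: field_split_simps)
qed

lemma maclaurin_coeff_expansion:
  fixes f :: "real \<Rightarrow> real"
  assumes "f has_fps_expansion F"
  shows "maclaurin_coeff f n = fps_nth F n"
proof -
  have "fps_nth F n = (deriv ^^ n) (eval_fps F) 0 / fact n"
    using assms by (intro fps_nth_conv_deriv_real) (auto simp: has_fps_expansion_def)
  also have "(deriv ^^ n) (eval_fps F) 0 = (deriv ^^ n) f 0"
    using assms by (intro higher_deriv_cong_ev) (auto simp: has_fps_expansion_def)
  finally show ?thesis by (simp add: maclaurin_coeff_def)
qed

lemma poly_has_fps_expansion_real:
  "(\<lambda>x::real. poly p x) has_fps_expansion fps_of_poly p"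
  by (auto simp: has_fps_expansion_def)

lemma binomial_has_fps_expansion_real:
  "(\<lambda>x::real. (1 + x) powr c) has_fps_expansion fps_binomial c"
proof -
  have *: "eventually (\<lambda>z::real. z \<in> ball 0 1) (nhds 0)"
    by (intro eventually_nhds_in_open) auto
  have "fps_conv_radius (fps_binomial c) > 0"
    by (simp add: fps_conv_radius_binomial)
  moreover have "eventually (\<lambda>z. eval_fps (fps_binomial c) z = (1 + z) powr c) (nhds 0)"
  proof (rule eventually_mono[OF *])
    fix z :: real assume "z \<in> ball 0 1"
    hence "\<bar>z\<bar> < 1" by auto
    from gen_binomial_real[OF this, of c] show "eval_fps (fps_binomial c) z = (1 + z) powr c"
      by (simp add: eval_fps_def sums_iff)
  qed
  ultimately show ?thesis by (auto simp: has_fps_expansion_def)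
qed

lemma pade_coeffs:
  fixes P Q :: "real poly"
  assumes "is_pade_mm \<alpha> m P Q" "k \<le> 2*m"
  shows "fps_nth (fps_of_poly P / fps_of_poly Q) k = (-\<alpha>) gchoose k"
proof -
  have Q0: "fps_nth (fps_of_poly Q) 0 \<noteq> 0"
    using assms(1) by (simp add: is_pade_mm_def poly_0_coeff_0)
  have "(\<lambda>t. poly P t / poly Q t) has_fps_expansion (fps_of_poly P / fps_of_poly Q)"
    by (intro has_fps_expansion_divide' poly_has_fps_expansion_real Q0)
  hence "maclaurin_coeff (\<lambda>t. poly P t / poly Q t) k = fps_nth (fps_of_poly P / fps_of_poly Q) k"
    by (rule maclaurin_coeff_expansion)
  moreover have "maclaurin_coeff (\<lambda>t::real. (1 + t) powr (-\<alpha>)) k = (-\<alpha>) gchoose k"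
    using maclaurin_coeff_expansion[OF binomial_has_fps_expansion_real] by simp
  ultimately show ?thesis using assms unfolding is_pade_mm_def by auto
qed



lemma ring_id:
  fixes X Q Q' Q'' F F' F'' c M :: "'a::comm_ring_1"
  shows "X*(1+X)*(Q''*F + 2*Q'*F' + Q*F'') + ((1+c-2*M)*X - 2*M)*(Q'*F + Q*F') + M*(M-c)*(Q*F)
   = F*(X*(1+X)*Q'' + ((1-c-2*M)*X - 2*M)*Q' + M*(M+c)*Q) + (2*X*Q' - 2*M*Q)*((1+X)*F' + c*F)
     + X*Q*((1+X)*F'' + (1+c)*F')"
  by (simp add: algebra_simps)

definition Lop :: "real fps \<Rightarrow> real fps \<Rightarrow> nat \<Rightarrow> real fps \<Rightarrow> real fps" where
  "Lop s p m y = fps_X * (1 + fps_X) * fps_deriv (fps_deriv y)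
     + (s * fps_X - 2 * fps_const (real m)) * fps_deriv y + p * y"

lemma Lop_nth:
  "fps_nth (Lop (fps_const s) (fps_const p) m y) n = (real n + 1) * (real n - 2 * real m) * fps_nth y (n+1)
      + (real n * (real n - 1) + s * real n + p) * fps_nth y n"
proof -
  have c: "(2::real fps) * fps_const (real m) = fps_const (2 * real m)" by simp
  show ?thesis
  proof (cases n)
    case 0
    then show ?thesis unfolding Lop_def c by (simp add: algebra_simps)
  next
    case (Suc k)
    then show ?thesis unfolding Lop_def c
      by (cases k) (simp_all add: algebra_simps)
  qed
qed

fun qs :: "real \<Rightarrow> nat \<Rightarrow> nat \<Rightarrow> real" where
  "qs a m 0 = 1"
| "qs a m (Suc j) = - ((real j - real m) * (real j - real m - a)
      / ((real j + 1) * (real j - 2 * real m))) * qs a m j"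

lemma qs_pos: assumes "0 < a" "a < 1" shows "j \<le> m \<Longrightarrow> qs a m j > 0"
proof (induction j)
  case 0 then show ?case by simp
next
  case (Suc j)
  have h1: "(real j - real m) * (real j - real m - a) > 0"
    using Suc.prems assms by (intro mult_neg_neg) auto
  have h2: "(real j + 1) * (real j - 2 * real m) < 0"
    using Suc.prems by (intro mult_pos_neg) auto
  have "- ((real j - real m) * (real j - real m - a) / ((real j + 1) * (real j - 2 * real m))) > 0"
    using h1 h2 by (simp add: divide_pos_neg)
  moreover have "qs a m j > 0" using Suc by simp
  ultimately have "(- ((real j - real m) * (real j - real m - a) / ((real j + 1) * (real j - 2 * real m)))) * qs a m j > 0"
    by (rule mult_pos_pos)
  then show ?case by (simp only: qs.simps)
qed

lemma qs_zero: "j > m \<Longrightarrow> qs a m j = 0"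
proof (induction j)
  case 0 then show ?case by simp
next
  case (Suc j)
  then show ?case by (cases "j = m") auto
qed

lemma qs_rec:
  assumes "m \<ge> 1"
  shows "(real j + 1) * (real j - 2 * real m) * qs a m (Suc j)
      + (real j * (real j - 1) + (1 - a - 2 * real m) * real j + real m * (real m + a)) * qs a m j = 0"
proof (cases "j = 2 * m")
  case True
  then show ?thesis using assms qs_zero[of m "2*m" a] qs_zero[of m "2*m+1" a] by simp
next
  case False
  hence ne: "(real j + 1) * (real j - 2 * real m) \<noteq> 0" by simp
  have e: "real j * (real j - 1) + (1 - a - 2 * real m) * real j + real m * (real m + a)
        = (real j - real m) * (real j - real m - a)" by (simp add: algebra_simps)
  show ?thesis using ne unfolding e by (simp add: field_simps)
qed

definition Fb :: "real \<Rightarrow> real fps" where "Fb a = fps_binomial (-a)"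

lemma E1: "(1 + fps_X) * fps_deriv (Fb a) + fps_const a * Fb a = 0"
proof -
  have "fps_nth (1 + fps_X :: real fps) 0 \<noteq> 0" by simp
  hence u: "(1 + fps_X :: real fps) \<noteq> 0" by auto
  have "(1 + fps_X) * fps_deriv (Fb a) = (1 + fps_X) * (fps_const (-a) * Fb a / (1 + fps_X))"
    by (simp add: Fb_def fps_binomial_deriv)
  also have "\<dots> = fps_const (-a) * Fb a"
  proof -
    have sd: "subdegree (1 + fps_X :: real fps) = 0" by (simp add: subdegree_eq_0_iff)
    show ?thesis using fps_times_divide_eq[OF u, of "fps_const (-a) * Fb a"] sd
      by (simp only: mult.commute[of "1 + fps_X"])
  qed
  finally show ?thesis by (simp flip: distrib_right)
qed

lemma E2: "(1 + fps_X) * fps_deriv (fps_deriv (Fb a)) + (1 + fps_const a) * fps_deriv (Fb a) = 0"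
proof -
  have "fps_deriv ((1 + fps_X) * fps_deriv (Fb a) + fps_const a * Fb a) = 0"
    using E1[of a] by simp
  thus ?thesis by (simp add: fps_deriv_mult algebra_simps)
qed

definition Qf :: "real \<Rightarrow> nat \<Rightarrow> real fps" where "Qf a m = Abs_fps (qs a m)"

lemma LQ:
  assumes "m \<ge> 1"
  shows "Lop (1 - fps_const a - 2 * fps_const (real m)) (fps_const (real m) * (fps_const (real m) + fps_const a)) m (Qf a m) = 0"
proof -
  have e1: "1 - fps_const a - 2 * fps_const (real m) = fps_const (1 - a - 2 * real m)" by simp
  have e2: "fps_const (real m) * (fps_const (real m) + fps_const a) = fps_const (real m * (real m + a))" by simp
  show ?thesis unfolding e1 e2
    by (rule fps_ext) (simp add: Lop_nth Qf_def qs_rec[OF assms] del: qs.simps)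
qed

lemma LG_eq:
  "Lop (1 + fps_const a - 2 * fps_const (real m)) (fps_const (real m) * (fps_const (real m) - fps_const a)) m (Q * Fb a)
   = Fb a * Lop (1 - fps_const a - 2 * fps_const (real m)) (fps_const (real m) * (fps_const (real m) + fps_const a)) m Q"
proof -
  let ?F = "Fb a"
  have d2: "fps_deriv (fps_deriv (Q * ?F)) = fps_deriv (fps_deriv Q) * ?F + 2 * fps_deriv Q * fps_deriv ?F + Q * fps_deriv (fps_deriv ?F)"
    by (simp add: fps_deriv_mult algebra_simps)
  have "Lop (1 + fps_const a - 2 * fps_const (real m)) (fps_const (real m) * (fps_const (real m) - fps_const a)) m (Q * ?F)
    = ?F * Lop (1 - fps_const a - 2 * fps_const (real m)) (fps_const (real m) * (fps_const (real m) + fps_const a)) m Q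
      + (2 * fps_X * fps_deriv Q - 2 * fps_const (real m) * Q) * ((1 + fps_X) * fps_deriv ?F + fps_const a * ?F)
      + fps_X * Q * ((1 + fps_X) * fps_deriv (fps_deriv ?F) + (1 + fps_const a) * fps_deriv ?F)"
    unfolding Lop_def d2 fps_deriv_mult
    using ring_id[of fps_X "fps_deriv (fps_deriv Q)" ?F "fps_deriv Q" "fps_deriv ?F" Q "fps_deriv (fps_deriv ?F)" "fps_const a" "fps_const (real m)"]
    by (simp add: algebra_simps)
  also have "\<dots> = ?F * Lop (1 - fps_const a - 2 * fps_const (real m)) (fps_const (real m) * (fps_const (real m) + fps_const a)) m Q"
    using E1[of a] E2[of a] by simp
  finally show ?thesis .
qed

definition Gs :: "real \<Rightarrow> nat \<Rightarrow> nat \<Rightarrow> real" where "Gs a m k = fps_nth (Qf a m * Fb a) k"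

lemma G_rec:
  assumes "m \<ge> 1"
  shows "(real k + 1) * (real k - 2 * real m) * Gs a m (k+1) + (real k - real m) * (real k - real m + a) * Gs a m k = 0"
proof -
  have e1: "1 + fps_const a - 2 * fps_const (real m) = fps_const (1 + a - 2 * real m)" by simp
  have e2: "fps_const (real m) * (fps_const (real m) - fps_const a) = fps_const (real m * (real m - a))" by simp
  have "Lop (1 + fps_const a - 2 * fps_const (real m)) (fps_const (real m) * (fps_const (real m) - fps_const a)) m (Qf a m * Fb a) = 0"
    unfolding LG_eq LQ[OF assms] by simp
  hence "fps_nth (Lop (fps_const (1 + a - 2 * real m)) (fps_const (real m * (real m - a))) m (Qf a m * Fb a)) k = 0"
    unfolding e1 e2 by simp
  thus ?thesis unfolding Lop_nth Gs_def by (simp add: algebra_simps)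
qed



lemma Gs0: "Gs a m 0 = 1"
  by (simp add: Gs_def Qf_def Fb_def fps_mult_nth)

lemma Gs_pos:
  assumes "0 < a" "a < 1" "m \<ge> 1"
  shows "k \<le> m \<Longrightarrow> Gs a m k > 0"
proof (induction k)
  case 0 then show ?case by (simp add: Gs0)
next
  case (Suc k)
  have r: "(real k + 1) * (real k - 2 * real m) * Gs a m (k+1) = - ((real k - real m) * (real k - real m + a) * Gs a m k)"
    using G_rec[OF assms(3), of k a] by linarith
  have h1: "(real k - real m) * (real k - real m + a) > 0"
    using Suc.prems assms by (intro mult_neg_neg) auto
  have h2: "(real k + 1) * (real k - 2 * real m) < 0"
    using Suc.prems by (intro mult_pos_neg) auto
  have "(real k - real m) * (real k - real m + a) * Gs a m k > 0"
    using h1 Suc by simp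
  hence neg: "(real k + 1) * (real k - 2 * real m) * Gs a m (k+1) < 0" using r by linarith
  show ?case
  proof (rule ccontr)
    assume "\<not> ?case"
    hence "Gs a m (Suc k) \<le> 0" by simp
    hence "(real k + 1) * (real k - 2 * real m) * Gs a m (k+1) \<ge> 0"
      using h2 by (intro mult_nonpos_nonpos) auto
    thus False using neg by simp
  qed
qed

lemma Gs_zero:
  assumes "0 < a" "a < 1" "m \<ge> 1"
  shows "m < k \<Longrightarrow> k \<le> 2*m \<Longrightarrow> Gs a m k = 0"
proof (induction k)
  case 0 then show ?case by simp
next
  case (Suc k)
  have r: "(real k + 1) * (real k - 2 * real m) * Gs a m (k+1) = - ((real k - real m) * (real k - real m + a) * Gs a m k)"
    using G_rec[OF assms(3), of k a] by linarith
  have "(real k - real m) * (real k - real m + a) * Gs a m k = 0"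
  proof (cases "k = m")
    case True then show ?thesis by simp
  next
    case False then show ?thesis using Suc by simp
  qed
  hence z: "(real k + 1) * (real k - 2 * real m) * Gs a m (k+1) = 0" using r by simp
  have "(real k + 1) * (real k - 2 * real m) \<noteq> 0" using Suc.prems by simp
  with z show ?case by simp
qed

definition Qp :: "real \<Rightarrow> nat \<Rightarrow> real poly" where
  "Qp a m = (\<Sum>j\<le>m. monom (qs a m j) j)"
definition Pp :: "real \<Rightarrow> nat \<Rightarrow> real poly" where
  "Pp a m = (\<Sum>j\<le>m. monom (Gs a m j) j)"

lemma coeff_Qp: "coeff (Qp a m) j = qs a m j"
  using qs_zero[of m j a] by (auto simp: Qp_def coeff_sum)

lemma coeff_Pp: "coeff (Pp a m) j = (if j \<le> m then Gs a m j else 0)"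
  by (auto simp: Pp_def coeff_sum)

lemma fps_Qp: "fps_of_poly (Qp a m) = Qf a m"
  by (rule fps_ext) (simp add: coeff_Qp Qf_def)

lemma poly_Qp: "poly (Qp a m) t = (\<Sum>j\<le>m. qs a m j * t ^ j)"
  by (simp add: Qp_def poly_sum poly_monom)

lemma poly_Pp: "poly (Pp a m) t = (\<Sum>j\<le>m. Gs a m j * t ^ j)"
  by (simp add: Pp_def poly_sum poly_monom)

lemma degree_Qp: assumes "0 < a" "a < 1" shows "degree (Qp a m) = m"
proof (rule antisym)
  show "m \<le> degree (Qp a m)" using qs_pos[OF assms, of m m] by (intro le_degree) (simp add: coeff_Qp)
  show "degree (Qp a m) \<le> m" by (intro degree_le) (simp add: coeff_Qp qs_zero)
qed

lemma degree_Pp: assumes "0 < a" "a < 1" "m \<ge> 1" shows "degree (Pp a m) = m"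
proof (rule antisym)
  show "m \<le> degree (Pp a m)" using Gs_pos[OF assms, of m] by (intro le_degree) (simp add: coeff_Pp)
  show "degree (Pp a m) \<le> m" by (intro degree_le) (simp add: coeff_Pp)
qed

lemma mult_agree:
  assumes "\<And>i. i \<le> N \<Longrightarrow> fps_nth A i = fps_nth B i" "k \<le> N"
  shows "fps_nth (C * A) k = fps_nth (C * B) k"
  unfolding fps_mult_nth using assms by (intro sum.cong) auto

lemma Pp_pade:
  assumes "0 < a" "a < 1" "m \<ge> 1" "k \<le> 2*m"
  shows "coeff (Pp a m) k = fps_nth (fps_of_poly (Qp a m) * Fb a) k"
  using Gs_zero[OF assms(1-3), of k] assms(4)
  by (simp add: coeff_Pp fps_Qp Gs_def[symmetric])

lemma given_pade:
  fixes P Q :: "real poly"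
  assumes "is_pade_mm a m P Q" "k \<le> 2*m"
  shows "coeff P k = fps_nth (fps_of_poly Q * Fb a) k"
proof -
  have Q0: "fps_nth (fps_of_poly Q) 0 \<noteq> 0"
    using assms(1) by (simp add: is_pade_mm_def poly_0_coeff_0)
  hence nz: "fps_of_poly Q \<noteq> 0" by auto
  have sd: "subdegree (fps_of_poly Q) = 0" using Q0 by (simp add: subdegree_eq_0_iff)
  have "fps_of_poly P = fps_of_poly Q * (fps_of_poly P / fps_of_poly Q)"
    using fps_times_divide_eq[OF nz, of "fps_of_poly P"] sd by (simp add: mult.commute)
  hence "coeff P k = fps_nth (fps_of_poly Q * (fps_of_poly P / fps_of_poly Q)) k"
    by (metis fps_of_poly_nth)
  also have "\<dots> = fps_nth (fps_of_poly Q * Fb a) k"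
    using pade_coeffs[OF assms(1)] assms(2)
    by (intro mult_agree[where N="2*m"]) (auto simp: Fb_def)
  finally show ?thesis .
qed



lemma ring_W:
  fixes X a a' b b' F F' c :: "'a::comm_ring_1"
  shows "(1+X)*(a'*b - a*b') + c*(a*b) = -( b*(1+X)*(b'*F + b*F' - a') + c*b*(b*F - a) - (1+X)*b'*(b*F - a) ) + b*b*((1+X)*F' + c*F)"
  by (simp add: algebra_simps)

lemma fps_11: "fps_of_poly [:1, 1:] = (1 + fps_X :: real fps)"
  by (simp add: fps_of_poly_pCons)

lemma wronski_low:
  fixes A B :: "real poly"
  assumes "\<And>k. k \<le> 2*m \<Longrightarrow> coeff A k = fps_nth (fps_of_poly B * Fb a) k" "k < 2*m"
  shows "coeff ([:1,1:] * (pderiv A * B - A * pderiv B) + smult a (A * B)) k = 0"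
proof -
  define b where "b = fps_of_poly B"
  define aa where "aa = fps_of_poly A"
  define S where "S = b * Fb a - aa"
  have S0: "fps_nth S i = 0" if "i \<le> 2*m" for i
    using assms(1)[OF that] by (simp add: S_def b_def aa_def)
  have S1: "fps_nth (fps_deriv S) i = 0" if "i \<le> 2*m - 1" for i
    using S0[of "i+1"] that assms(2) by simp
  have dS: "fps_deriv S = fps_deriv b * Fb a + b * fps_deriv (Fb a) - fps_deriv aa"
    by (simp add: S_def fps_deriv_mult algebra_simps)
  have "fps_of_poly ([:1,1:] * (pderiv A * B - A * pderiv B) + smult a (A * B))
      = (1+fps_X)*(fps_deriv aa*b - aa*fps_deriv b) + fps_const a*(aa*b)"
    unfolding fps_of_poly_add fps_of_poly_mult fps_of_poly_diff fps_of_poly_pderiv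
        fps_of_poly_smult fps_11 aa_def b_def by simp
  also have "\<dots> = -( b*(1+fps_X)*fps_deriv S + fps_const a*b*S - (1+fps_X)*fps_deriv b*S )"
    unfolding dS S_def
    using ring_W[of fps_X "fps_deriv aa" b aa "fps_deriv b" "fps_const a" "Fb a" "fps_deriv (Fb a)"] E1[of a]
    by simp
  finally have eq: "fps_of_poly ([:1,1:] * (pderiv A * B - A * pderiv B) + smult a (A * B))
      = -( b*(1+fps_X)*fps_deriv S + fps_const a*b*S - (1+fps_X)*fps_deriv b*S )" .
  have z1: "fps_nth (b*(1+fps_X)*fps_deriv S) k = 0"
    using mult_agree[of "2*m - 1" "fps_deriv S" 0 k "b*(1+fps_X)"] S1 assms(2) by simp
  have z2: "fps_nth (fps_const a*b*S) k = 0"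
    using mult_agree[of "2*m" S 0 k "fps_const a*b"] S0 assms(2) by simp
  have z3: "fps_nth ((1+fps_X)*fps_deriv b*S) k = 0"
    using mult_agree[of "2*m" S 0 k "(1+fps_X)*fps_deriv b"] S0 assms(2) by simp
  have "coeff ([:1,1:] * (pderiv A * B - A * pderiv B) + smult a (A * B)) k
     = fps_nth (fps_of_poly ([:1,1:] * (pderiv A * B - A * pderiv B) + smult a (A * B))) k"
    by simp
  also have "\<dots> = 0" unfolding eq using z1 z2 z3 by simp
  finally show ?thesis .
qed

lemma coeff_11_Suc: "coeff ([:1,1:] * W) (Suc n) = coeff W (Suc n) + coeff (W::real poly) n"
  by (simp add: mult_pCons_left)

lemma wronski_exact:
  fixes A B :: "real poly"
  assumes "\<And>k. k \<le> 2*m \<Longrightarrow> coeff A k = fps_nth (fps_of_poly B * Fb a) k"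
    and dA: "degree A = m" and dB: "degree B = m" and m1: "m \<ge> 1"
  shows "[:1,1:] * (pderiv A * B - A * pderiv B) + smult a (A * B)
       = monom (a * coeff A m * coeff B m) (2*m)"
proof (rule poly_eqI)
  fix n
  define W where "W = pderiv A * B - A * pderiv B"
  have dW: "degree W \<le> 2*m - 1"
  proof -
    have "degree (pderiv A * B) \<le> 2*m - 1"
      using degree_mult_le[of "pderiv A" B] degree_pderiv[of A] dA dB m1 by simp
    moreover have "degree (A * pderiv B) \<le> 2*m - 1"
      using degree_mult_le[of A "pderiv B"] degree_pderiv[of B] dA dB m1 by simp
    ultimately show ?thesis unfolding W_def by (meson degree_diff_le)
  qed
  have cW: "coeff W (2*m - 1) = 0"
  proof -
    have "coeff (pderiv A * B) (degree (pderiv A) + degree B) = coeff (pderiv A) (degree (pderiv A)) * coeff B (degree B)"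
      by (rule coeff_mult_degree_sum)
    hence 1: "coeff (pderiv A * B) (2*m - 1) = real m * coeff A m * coeff B m"
      using degree_pderiv[of A] dA dB m1 by (simp add: coeff_pderiv mult_2)
    have "coeff (A * pderiv B) (degree A + degree (pderiv B)) = coeff A (degree A) * coeff (pderiv B) (degree (pderiv B))"
      by (rule coeff_mult_degree_sum)
    hence 2: "coeff (A * pderiv B) (2*m - 1) = real m * coeff A m * coeff B m"
      using degree_pderiv[of B] dA dB m1 by (simp add: coeff_pderiv mult_2)
    show ?thesis using 1 2 by (simp add: W_def)
  qed
  have cAB: "coeff (A * B) (2*m) = coeff A m * coeff B m"
    using coeff_mult_degree_sum[of A B] dA dB by (simp add: mult_2)
  consider "n < 2*m" | "n = 2*m" | "n > 2*m" by linarith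
  then show "coeff ([:1,1:] * (pderiv A * B - A * pderiv B) + smult a (A * B)) n
           = coeff (monom (a * coeff A m * coeff B m) (2*m)) n"
  proof cases
    case 1
    have "coeff ([:1,1:] * (pderiv A * B - A * pderiv B) + smult a (A * B)) n = 0"
      by (rule wronski_low[OF assms(1) 1])
    then show ?thesis using 1 by simp
  next
    case 2
    have e: "2*m = Suc (2*m - 1)" using m1 by simp
    have "coeff W (2*m) = 0" using dW m1 by (intro coeff_eq_0) simp
    hence "coeff ([:1,1:] * W) (2*m) = 0" using cW coeff_11_Suc[of W "2*m-1"] e by simp
    then show ?thesis using 2 cAB by (simp add: W_def[symmetric])
  next
    case 3
    then obtain n' where n': "n = Suc n'" "n' \<ge> 2*m" by (cases n) auto
    have "coeff W n = 0" "coeff W n' = 0" using dW n' m1 by (auto intro!: coeff_eq_0)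
    hence "coeff ([:1,1:] * W) n = 0" using coeff_11_Suc[of W n'] n' by simp
    moreover have "coeff (A * B) n = 0"
      using degree_mult_le[of A B] dA dB 3 by (intro coeff_eq_0) simp
    ultimately show ?thesis using 3 by (simp add: W_def[symmetric])
  qed
qed



lemma cross_eq:
  fixes P Q :: "real poly"
  assumes a: "0 < a" "a < 1" and m1: "m \<ge> 1" and pd: "is_pade_mm a m P Q"
  shows "Qp a m * P = Q * Pp a m"
proof (rule poly_eqI)
  fix n
  define D where "D = Qp a m * P - Q * Pp a m"
  have dP: "degree P \<le> m" and dQ: "degree Q \<le> m" using pd by (auto simp: is_pade_mm_def)
  have dD: "degree D \<le> 2*m"
  proof -
    have "degree (Qp a m * P) \<le> 2*m" using degree_mult_le[of "Qp a m" P] degree_Qp[OF a, of m] dP by simp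
    moreover have "degree (Q * Pp a m) \<le> 2*m" using degree_mult_le[of Q "Pp a m"] degree_Pp[OF a m1] dQ by simp
    ultimately show ?thesis unfolding D_def by (meson degree_diff_le)
  qed
  have "coeff D n = 0"
  proof (cases "n \<le> 2*m")
    case True
    have 1: "fps_nth (fps_of_poly (Qp a m) * fps_of_poly P) n
           = fps_nth (fps_of_poly (Qp a m) * (fps_of_poly Q * Fb a)) n"
      using given_pade[OF pd] True by (intro mult_agree[where N="2*m"]) auto
    have 2: "fps_nth (fps_of_poly Q * fps_of_poly (Pp a m)) n
           = fps_nth (fps_of_poly Q * (fps_of_poly (Qp a m) * Fb a)) n"
      using Pp_pade[OF a m1] True by (intro mult_agree[where N="2*m"]) auto
    have "coeff D n = fps_nth (fps_of_poly (Qp a m) * fps_of_poly P) n - fps_nth (fps_of_poly Q * fps_of_poly (Pp a m)) n"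
      by (simp add: D_def fps_of_poly_mult[symmetric])
    also have "\<dots> = 0" unfolding 1 2 by (simp add: mult.left_commute)
    finally show ?thesis .
  next
    case False then show ?thesis using dD by (intro coeff_eq_0) simp
  qed
  thus "coeff (Qp a m * P) n = coeff (Q * Pp a m) n" by (simp add: D_def)
qed

lemma coprime_PpQp:
  assumes a: "0 < a" "a < 1" and m1: "m \<ge> 1"
  shows "coprime (Pp a m) (Qp a m)"
proof (rule coprimeI)
  fix c assume c1: "c dvd Pp a m" and c2: "c dvd Qp a m"
  let ?A = "Pp a m" and ?B = "Qp a m"
  have pade: "\<And>k. k \<le> 2*m \<Longrightarrow> coeff ?A k = fps_nth (fps_of_poly ?B * Fb a) k"
    using Pp_pade[OF a m1] by auto
  have eq: "[:1,1:] * (pderiv ?A * ?B - ?A * pderiv ?B) + smult a (?A * ?B)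
       = monom (a * coeff ?A m * coeff ?B m) (2*m)"
    by (rule wronski_exact[OF pade degree_Pp[OF a m1] degree_Qp[OF a] m1])
  have "c dvd pderiv ?A * ?B" using c2 by (rule dvd_mult)
  moreover have "c dvd ?A * pderiv ?B" using c1 by (rule dvd_mult2)
  ultimately have "c dvd pderiv ?A * ?B - ?A * pderiv ?B" by (rule dvd_diff)
  hence "c dvd [:1,1:] * (pderiv ?A * ?B - ?A * pderiv ?B)" by (rule dvd_mult)
  moreover have "c dvd smult a (?A * ?B)" using c1 by (intro dvd_smult dvd_mult2)
  ultimately have "c dvd [:1,1:] * (pderiv ?A * ?B - ?A * pderiv ?B) + smult a (?A * ?B)"
    by (rule dvd_add)
  hence "c dvd smult (a * coeff ?A m * coeff ?B m) ([:0,1:] ^ (2*m))"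
    unfolding eq monom_altdef .
  moreover have "a * coeff ?A m * coeff ?B m \<noteq> 0"
    using a Gs_pos[OF a m1, of m] qs_pos[OF a, of m m] by (simp add: coeff_Pp coeff_Qp)
  ultimately have c3: "c dvd [:0,1:] ^ (2*m)" by (rule dvd_smult_cancel)
  have pr: "prime_elem [:0, 1::real:]" by (rule prime_elem_linear_field_poly) simp
  have "\<not> [:0,1:] dvd ?B"
  proof
    assume "[:0,1:] dvd ?B"
    hence "poly ?B 0 = 0" using poly_eq_0_iff_dvd[of ?B 0] by simp
    thus False by (simp add: poly_0_coeff_0 coeff_Qp)
  qed
  hence "coprime [:0,1:] ?B" by (rule prime_elem_imp_coprime[OF pr])
  hence "coprime ?B ([:0,1:] ^ (2*m))" by (simp add: coprime_commute)
  thus "is_unit c" using c2 c3 by (rule coprime_common_divisor)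
qed

lemma uniq:
  fixes P Q :: "real poly"
  assumes a: "0 < a" "a < 1" and m1: "m \<ge> 1" and pd: "is_pade_mm a m P Q"
  shows "P = Pp a m \<and> Q = Qp a m"
proof -
  have ce: "Qp a m * P = Q * Pp a m" by (rule cross_eq[OF assms])
  have "Qp a m dvd Q * Pp a m" unfolding ce[symmetric] by simp
  hence "Qp a m dvd Q"
    using coprime_dvd_mult_left_iff[of "Qp a m" "Pp a m" Q] coprime_PpQp[OF assms(1-3)]
    by (simp add: coprime_commute)
  then obtain k where k: "Q = Qp a m * k" by (elim dvdE)
  have Q0: "poly Q 0 = 1" and dQ: "degree Q \<le> m" using pd by (auto simp: is_pade_mm_def)
  have Qp0: "Qp a m \<noteq> 0" using degree_Qp[OF a, of m] m1 by auto
  have "k \<noteq> 0" using k Q0 by auto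
  hence "degree Q = m + degree k" using k degree_mult_eq[OF Qp0] degree_Qp[OF a] by simp
  hence "degree k = 0" using dQ by simp
  then obtain k0 where k0: "k = [:k0:]" by (meson degree_eq_zeroE)
  have "poly (Qp a m) 0 = 1" by (simp add: poly_0_coeff_0 coeff_Qp)
  hence "k0 = 1" using Q0 k k0 by simp
  hence QQ: "Q = Qp a m" using k k0 by simp
  hence "Qp a m * P = Qp a m * Pp a m" using ce by (simp add: mult.commute)
  hence "P = Pp a m" using Qp0 by simp
  thus ?thesis using QQ by simp
qed



lemma sum_ge_term:
  fixes f :: "nat \<Rightarrow> real"
  assumes "\<And>j. j \<le> m \<Longrightarrow> f j \<ge> 0" "i \<le> m"
  shows "(\<Sum>j\<le>m. f j) \<ge> f i"
  using assms by (intro member_le_sum) auto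

theorem mainTheorem3:
  fixes \<alpha> :: real and m :: nat and P Q :: "real poly"
  assumes "0 < \<alpha>" "\<alpha> < 1" "m \<ge> 1"
    and "is_pade_mm \<alpha> m P Q"
  shows "antimono_on {0..} (\<lambda>t. poly P t / poly Q t)"
proof -
  note a = assms(1,2) and m1 = assms(3)
  have PQ: "P = Pp \<alpha> m" "Q = Qp \<alpha> m" using uniq[OF assms] by auto
  let ?A = "Pp \<alpha> m" and ?B = "Qp \<alpha> m"
  have pade: "\<And>k. k \<le> 2*m \<Longrightarrow> coeff ?A k = fps_nth (fps_of_poly ?B * Fb \<alpha>) k"
    using Pp_pade[OF a m1] by auto
  have eq: "[:1,1:] * (pderiv ?A * ?B - ?A * pderiv ?B) + smult \<alpha> (?A * ?B)
       = monom (\<alpha> * coeff ?A m * coeff ?B m) (2*m)"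
    by (rule wronski_exact[OF pade degree_Pp[OF a m1] degree_Qp[OF a] m1])
  have qnn: "\<And>j. j \<le> m \<Longrightarrow> qs \<alpha> m j \<ge> 0" using qs_pos[OF a] by (simp add: less_imp_le)
  have gnn: "\<And>j. j \<le> m \<Longrightarrow> Gs \<alpha> m j \<ge> 0" using Gs_pos[OF a m1] by (simp add: less_imp_le)
  have Bpos: "poly ?B t \<ge> 1" if t: "t \<ge> 0" for t
  proof -
    have "poly ?B t \<ge> qs \<alpha> m 0 * t ^ 0"
      unfolding poly_Qp using qnn t by (intro sum_ge_term) auto
    thus ?thesis by simp
  qed
  have Wneg: "poly (pderiv ?A * ?B - ?A * pderiv ?B) t \<le> 0" if t: "t \<ge> 0" for t
  proof -
    have ev: "(1 + t) * poly (pderiv ?A * ?B - ?A * pderiv ?B) t + \<alpha> * (poly ?A t * poly ?B t)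
        = \<alpha> * coeff ?A m * coeff ?B m * t ^ (2*m)"
      using arg_cong[OF eq, of "\<lambda>p. poly p t"] by (simp add: poly_monom algebra_simps)
    have ha: "poly ?A t \<ge> Gs \<alpha> m m * t ^ m"
      unfolding poly_Pp using gnn t by (intro sum_ge_term) auto
    have hb: "poly ?B t \<ge> qs \<alpha> m m * t ^ m"
      unfolding poly_Qp using qnn t by (intro sum_ge_term) auto
    have "poly ?A t * poly ?B t \<ge> (Gs \<alpha> m m * t ^ m) * (qs \<alpha> m m * t ^ m)"
    proof (rule mult_mono)
      have "0 \<le> Gs \<alpha> m m * t ^ m" using gnn[of m] t by simp
      thus "0 \<le> poly ?A t" using ha by linarith
      show "0 \<le> qs \<alpha> m m * t ^ m" using qnn[of m] t by simp
    qed (use ha hb in auto)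
    also have "(Gs \<alpha> m m * t ^ m) * (qs \<alpha> m m * t ^ m) = coeff ?A m * coeff ?B m * t ^ (2*m)"
      by (simp add: coeff_Pp coeff_Qp power_add[symmetric] mult_2 mult_2_right algebra_simps)
    finally have "\<alpha> * (poly ?A t * poly ?B t) \<ge> \<alpha> * coeff ?A m * coeff ?B m * t ^ (2*m)"
      using a by (simp add: mult_left_mono mult.assoc)
    hence "(1 + t) * poly (pderiv ?A * ?B - ?A * pderiv ?B) t \<le> 0" using ev by linarith
    thus ?thesis using t by (simp add: mult_le_0_iff)
  qed
  show ?thesis unfolding PQ
  proof (rule monotone_onI)
    fix x y :: real assume xy: "x \<in> {0..}" "y \<in> {0..}" "x \<le> y"
    have "poly ?A y / poly ?B y \<le> poly ?A x / poly ?B x"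
    proof (rule DERIV_nonpos_imp_nonincreasing[OF xy(3)])
      fix t assume t: "x \<le> t" "t \<le> y"
      hence t0: "t \<ge> 0" using xy by auto
      have nz: "poly ?B t \<noteq> 0" using Bpos[OF t0] by auto
      have "DERIV (\<lambda>t. poly ?A t / poly ?B t) t :>
          (poly (pderiv ?A) t * poly ?B t - poly ?A t * poly (pderiv ?B) t) / (poly ?B t * poly ?B t)"
        by (rule DERIV_divide[OF poly_DERIV poly_DERIV nz])
      moreover have "(poly (pderiv ?A) t * poly ?B t - poly ?A t * poly (pderiv ?B) t) / (poly ?B t * poly ?B t) \<le> 0"
        using Wneg[OF t0] by (intro divide_nonpos_nonneg) auto
      ultimately show "\<exists>y. DERIV (\<lambda>t. poly ?A t / poly ?B t) t :> y \<and> y \<le> 0" by blast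
    qed
    thus "poly ?A y / poly ?B y \<le> poly ?A x / poly ?B x" .
  qed
qed

end
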